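(* Let $\mathfrak g$ be a Lie algebra over a field $\mathbb k$ and $X$ its associated TSD object (obtained by composing the binary SD operation). The homomorphism $\Theta^2\colon H^2_{\rm Lie}(\mathfrak g;\mathfrak g)\to H^2_{\rm TSD}(X;X)$ induced by $\Theta^2(\phi)((a,x)\otimes(b,y)\otimes(c,z))=(0,\ b\phi(x,z)+c\phi(x,y)+[\phi(x,y),z]+\phi([x,y],z))$ is injective.
   Context: $X=\mathbb k\oplus\mathfrak g$, $\Delta(a,x)=(a,x)\otimes(1,0)+(1,0)\otimes(0,x)$, $\Delta_3=(\Delta\otimes\mathbb 1)\Delta$, $q((a,x)\otimes(b,y))=(ab,bx+[x,y])$, $T=q\circ(q\otimes\mathbb 1)$, so $T((a,x)\otimes(b,y)\otimes(c,z))=(abc,bcx+c[x,y]+b[x,z]+[[x,y],z])$. TSD cohomology: with $\sigma$ sending $u_1\otimes\cdots\otimes u_9$ to $u_1\otimes u_4\otimes u_7\otimes u_2\otimes u_5\otimes u_8\otimes u_3\otimes u_6\otimes u_9$: $C^1_{\rm TSD}$ = linear $f$ with $\Delta_3 f=(f\otimes\mathbb 1\otimes\mathbb 1+\mathbb 1\otimes f\otimes\mathbb 1+\mathbb 1\otimes\mathbb 1\otimes f)\Delta_3$; $C^2_{\rm TSD}$ = linear $\psi\colon X^{\otimes 3}\to X$ with $\Delta_3\psi=(\psi\otimes T\otimes T+T\otimes\psi\otimes T+T\otimes T\otimes\psi)\sigma\Delta_3^{\otimes3}$; $\delta^1 f(x\otimes y\otimes z)=f(T(x\otimes y\otimes z))-T(f(x)\otimes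 y\otimes z)-T(x\otimes f(y)\otimes z)-T(x\otimes y\otimes f(z))$; $\delta^2\psi(x\otimes y\otimes z\otimes w\otimes u)=T(\psi(x\otimes y\otimes z)\otimes w\otimes u)+\psi(T(x\otimes y\otimes z)\otimes w\otimes u)-\psi(A_1\otimes A_2\otimes A_3)-T(\Psi_1\otimes A_2\otimes A_3)-T(A_1\otimes\Psi_2\otimes A_3)-T(A_1\otimes A_2\otimes\Psi_3)$, $A_i=T(x_i\otimes w^{(i)}\otimes u^{(i)})$ with $(x_1,x_2,x_3)=(x,y,z)$, $\Psi_i$ likewise with $\psi$; $H^2_{\rm TSD}=(C^2\cap\ker\delta^2)/\delta^1(C^1)$. Lie cohomology: alternating bilinear $2$-cochains $\phi$, $\delta^2\phi(x,y,z)=[\phi(x,y),z]+[\phi(y,z),x]+[\phi(z,x),y]+\phi([x,y],z)+\phi([y,z],x)+\phi([z,x],y)$, $\delta^1f(x,y)=f([x,y])-[f(x),y]-[x,f(y)]$, $H^2_{\rm Lie}=\ker\delta^2/\operatorname{im}\delta^1$. *)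

theory Defs
  imports Complex_Main "HOL-Library.Product_Plus"
begin

definition lie_algebra :: "('k::field \<Rightarrow> 'g::ab_group_add \<Rightarrow> 'g) \<Rightarrow> ('g \<Rightarrow> 'g \<Rightarrow> 'g) \<Rightarrow> bool" where
  "lie_algebra s br \<longleftrightarrow> vector_space s
     \<and> (\<forall>x y z. br (x + y) z = br x z + br y z)
     \<and> (\<forall>x y z. br x (y + z) = br x y + br x z)
     \<and> (\<forall>c x y. br (s c x) y = s c (br x y))
     \<and> (\<forall>c x y. br x (s c y) = s c (br x y))
     \<and> (\<forall>x. br x x = 0)
     \<and> (\<forall>x y z. br (br x y) z + br (br y z) x + br (br z x) y = 0)"

definition lie_cochain2 :: "('k::field \<Rightarrow> 'g::ab_group_add \<Rightarrow> 'g) \<Rightarrow> ('g \<Rightarrow> 'g \<Rightarrow> 'g) \<Rightarrow> bool" where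
  "lie_cochain2 s \<phi> \<longleftrightarrow>
     (\<forall>x. Vector_Spaces.linear s s (\<lambda>y. \<phi> x y))
     \<and> (\<forall>y. Vector_Spaces.linear s s (\<lambda>x. \<phi> x y))
     \<and> (\<forall>x. \<phi> x x = 0)"

definition lie_d2 :: "('g::ab_group_add \<Rightarrow> 'g \<Rightarrow> 'g) \<Rightarrow> ('g \<Rightarrow> 'g \<Rightarrow> 'g) \<Rightarrow> 'g \<Rightarrow> 'g \<Rightarrow> 'g \<Rightarrow> 'g" where
  "lie_d2 br \<phi> x y z =
     br (\<phi> x y) z + br (\<phi> y z) x + br (\<phi> z x) y
     + \<phi> (br x y) z + \<phi> (br y z) x + \<phi> (br z x) y"

definition lie_d1 :: "('g::ab_group_add \<Rightarrow> 'g \<Rightarrow> 'g) \<Rightarrow> ('g \<Rightarrow> 'g) \<Rightarrow> 'g \<Rightarrow> 'g \<Rightarrow> 'g" where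
  "lie_d1 br f x y = f (br x y) - br (f x) y - br x (f y)"

definition Xs :: "('k::field \<Rightarrow> 'g \<Rightarrow> 'g) \<Rightarrow> 'k \<Rightarrow> 'k \<times> 'g \<Rightarrow> 'k \<times> 'g" where
  "Xs s c u = (c * fst u, s c (snd u))"

definition Xunit :: "'k::field \<times> 'g::ab_group_add" where
  "Xunit = (1, 0)"

definition Xhat :: "'g \<Rightarrow> 'k::field \<times> 'g::ab_group_add" where
  "Xhat x = (0, x)"

definition q_op :: "('k::field \<Rightarrow> 'g::ab_group_add \<Rightarrow> 'g) \<Rightarrow> ('g \<Rightarrow> 'g \<Rightarrow> 'g)
    \<Rightarrow> 'k \<times> 'g \<Rightarrow> 'k \<times> 'g \<Rightarrow> 'k \<times> 'g" where
  "q_op s br u v = (fst u * fst v, s (fst v) (snd u) + br (snd u) (snd v))"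

definition T_op :: "('k::field \<Rightarrow> 'g::ab_group_add \<Rightarrow> 'g) \<Rightarrow> ('g \<Rightarrow> 'g \<Rightarrow> 'g)
    \<Rightarrow> 'k \<times> 'g \<Rightarrow> 'k \<times> 'g \<Rightarrow> 'k \<times> 'g \<Rightarrow> 'k \<times> 'g" where
  "T_op s br u v w = q_op s br (q_op s br u v) w"

(* An element of X^\<otimes>^2 (resp. X^\<otimes>^3) is represented by a list of pure tensors
  (formal sum). Linear maps out of X^\<otimes>^n are represented by n-linear maps.
  Two elements of X^\<otimes>^3 are equal iff every trilinear form X \<times> X \<times> X \<rightarrow> k
  takes the same value on them (linear functionals on a tensor product of vector
  spaces separate points). *)

definition Delta :: "'k::field \<times> 'g::ab_group_add \<Rightarrow> (('k \<times> 'g) \<times> ('k \<times> 'g)) list" where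
  "Delta u = [(u, Xunit), (Xunit, Xhat (snd u))]"

(* \<Delta>_3 = (\<Delta> \<otimes> 1) \<Delta>. *)
definition Delta3 :: "'k::field \<times> 'g::ab_group_add \<Rightarrow> (('k \<times> 'g) \<times> ('k \<times> 'g) \<times> ('k \<times> 'g)) list" where
  "Delta3 u = concat (map (\<lambda>(p, r). map (\<lambda>(p1, p2). (p1, p2, r)) (Delta p)) (Delta u))"

definition ev3 :: "('a \<Rightarrow> 'a \<Rightarrow> 'a \<Rightarrow> 'k::comm_monoid_add) \<Rightarrow> ('a \<times> 'a \<times> 'a) list \<Rightarrow> 'k" where
  "ev3 \<beta> L = sum_list (map (\<lambda>(a, b, c). \<beta> a b c) L)"

definition trilinear :: "('k::field \<Rightarrow> 'a::ab_group_add \<Rightarrow> 'a) \<Rightarrow> ('k \<Rightarrow> 'b::ab_group_add \<Rightarrow> 'b)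
    \<Rightarrow> ('a \<Rightarrow> 'a \<Rightarrow> 'a \<Rightarrow> 'b) \<Rightarrow> bool" where
  "trilinear s1 s2 F \<longleftrightarrow>
     (\<forall>v w. Vector_Spaces.linear s1 s2 (\<lambda>u. F u v w))
     \<and> (\<forall>u w. Vector_Spaces.linear s1 s2 (\<lambda>v. F u v w))
     \<and> (\<forall>u v. Vector_Spaces.linear s1 s2 (\<lambda>w. F u v w))"

(* C^1: linear f with \<Delta>_3 f = (f\<otimes>1\<otimes>1 + 1\<otimes>f\<otimes>1 + 1\<otimes>1\<otimes>f) \<Delta>_3. *)
definition C1_TSD :: "('k::field \<Rightarrow> 'g::ab_group_add \<Rightarrow> 'g) \<Rightarrow> ('k \<times> 'g \<Rightarrow> 'k \<times> 'g) \<Rightarrow> bool" where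
  "C1_TSD s f \<longleftrightarrow> Vector_Spaces.linear (Xs s) (Xs s) f
     \<and> (\<forall>u \<beta>. trilinear (Xs s) (*) \<beta> \<longrightarrow>
          ev3 \<beta> (Delta3 (f u)) =
          ev3 \<beta> (concat (map (\<lambda>(a, b, c). [(f a, b, c), (a, f b, c), (a, b, f c)]) (Delta3 u))))"

(* C^2: linear \<psi> : X^\<otimes>^3 \<rightarrow> X (a trilinear map) with
  \<Delta>_3 \<psi> = (\<psi>\<otimes>T\<otimes>T + T\<otimes>\<psi>\<otimes>T + T\<otimes>T\<otimes>\<psi>) \<sigma> \<Delta>_3^\<otimes>^3.
  On u \<otimes> v \<otimes> w, \<sigma> \<Delta>_3^\<otimes>^3 sends the pure terms (u1\<otimes>u2\<otimes>u3)\<otimes>(v1\<otimes>v2\<otimes>v3)\<otimes>(w1\<otimes>w2\<otimes>w3)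
  to (u1\<otimes>v1\<otimes>w1)\<otimes>(u2\<otimes>v2\<otimes>w2)\<otimes>(u3\<otimes>v3\<otimes>w3). *)
definition C2_TSD :: "('k::field \<Rightarrow> 'g::ab_group_add \<Rightarrow> 'g) \<Rightarrow> ('g \<Rightarrow> 'g \<Rightarrow> 'g)
    \<Rightarrow> ('k \<times> 'g \<Rightarrow> 'k \<times> 'g \<Rightarrow> 'k \<times> 'g \<Rightarrow> 'k \<times> 'g) \<Rightarrow> bool" where
  "C2_TSD s br \<psi> \<longleftrightarrow> trilinear (Xs s) (Xs s) \<psi>
     \<and> (\<forall>u v w \<beta>. trilinear (Xs s) (*) \<beta> \<longrightarrow>
          ev3 \<beta> (Delta3 (\<psi> u v w)) =
          ev3 \<beta> (concat (map (\<lambda>((u1, u2, u3), (v1, v2, v3), (w1, w2, w3)).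
                  [(\<psi> u1 v1 w1, T_op s br u2 v2 w2, T_op s br u3 v3 w3),
                   (T_op s br u1 v1 w1, \<psi> u2 v2 w2, T_op s br u3 v3 w3),
                   (T_op s br u1 v1 w1, T_op s br u2 v2 w2, \<psi> u3 v3 w3)])
                (List.product (Delta3 u) (List.product (Delta3 v) (Delta3 w))))))"

definition tsd_d1 :: "('k::field \<Rightarrow> 'g::ab_group_add \<Rightarrow> 'g) \<Rightarrow> ('g \<Rightarrow> 'g \<Rightarrow> 'g)
    \<Rightarrow> ('k \<times> 'g \<Rightarrow> 'k \<times> 'g) \<Rightarrow> 'k \<times> 'g \<Rightarrow> 'k \<times> 'g \<Rightarrow> 'k \<times> 'g \<Rightarrow> 'k \<times> 'g" where
  "tsd_d1 s br f x y z = f (T_op s br x y z) - T_op s br (f x) y z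
     - T_op s br x (f y) z - T_op s br x y (f z)"

definition Theta2 :: "('k::field \<Rightarrow> 'g::ab_group_add \<Rightarrow> 'g) \<Rightarrow> ('g \<Rightarrow> 'g \<Rightarrow> 'g) \<Rightarrow> ('g \<Rightarrow> 'g \<Rightarrow> 'g)
    \<Rightarrow> 'k \<times> 'g \<Rightarrow> 'k \<times> 'g \<Rightarrow> 'k \<times> 'g \<Rightarrow> 'k \<times> 'g" where
  "Theta2 s br \<phi> u v w =
     (let x = snd u; b = fst v; y = snd v; c = fst w; z = snd w in
      (0, s b (\<phi> x z) + s c (\<phi> x y) + br (\<phi> x y) z + \<phi> (br x y) z))"

end

theory Submission
  imports Defs
begin

theorem mainTheorem8:
  fixes s :: "'k::field \<Rightarrow> 'g::ab_group_add \<Rightarrow> 'g"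
    and br :: "'g \<Rightarrow> 'g \<Rightarrow> 'g"
    and \<phi> :: "'g \<Rightarrow> 'g \<Rightarrow> 'g"
  assumes "lie_algebra s br"
    and "lie_cochain2 s \<phi>"
    and "\<forall>x y z. lie_d2 br \<phi> x y z = 0"
    and "\<exists>f. C1_TSD s f \<and> Theta2 s br \<phi> = tsd_d1 s br f"
  shows "\<exists>f. Vector_Spaces.linear s s f \<and> \<phi> = lie_d1 br f"
proof -
  obtain f where fC: "C1_TSD s f" and fe: "Theta2 s br \<phi> = tsd_d1 s br f" using assms(4) by blast
  have vs: "vector_space s" and badd1: "\<And>x y z. br (x + y) z = br x z + br y z"
    and badd2: "\<And>x y z. br x (y + z) = br x y + br x z" and balt: "\<And>x. br x x = 0"
    using assms(1) unfolding lie_algebra_def by auto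
  have s1: "\<And>v. s 1 v = v" using vs by (simp add: vector_space_def)
  have sadd: "\<And>a v w. s a (v + w) = s a v + s a w" using vs by (simp add: vector_space_def)
  have sadd2: "\<And>a b v. s (a + b) v = s a v + s b v" using vs by (simp add: vector_space_def)
  have sass: "\<And>a b v. s a (s b v) = s (a * b) v" using vs by (simp add: vector_space_def)
  have s0: "\<And>v. s 0 v = 0" using sadd2[of 0 0] by (metis add_cancel_right_right add_0)
  have sz: "\<And>a. s a 0 = 0" using sadd[of _ 0 0] by (metis add_cancel_right_right add_0)
  have br0: "\<And>x. br x 0 = 0" using badd2[of _ 0 0] by (metis add_cancel_right_right add_0)
  have b0: "\<And>x. br 0 x = 0" using badd1[of 0 0] by (metis add_cancel_right_right add_0)
  have banti: "\<And>x y. br x y = - br y x"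
  proof -
    fix x y
    have "0 = br (x + y) (x + y)" using balt by simp
    also have "\<dots> = br x x + br x y + (br y x + br y y)" by (simp add: badd1 badd2)
    also have "\<dots> = br x y + br y x" by (simp add: balt)
    finally show "br x y = - br y x" by (simp add: eq_neg_iff_add_eq_0)
  qed
  have philin2: "\<And>x. Vector_Spaces.linear s s (\<lambda>y. \<phi> x y)"
    and philin1: "\<And>y. Vector_Spaces.linear s s (\<lambda>x. \<phi> x y)"
    using assms(2) unfolding lie_cochain2_def by auto
  have phi0: "\<And>x. \<phi> x 0 = 0"
  proof -
    fix x have "\<phi> x (0 + 0) = \<phi> x 0 + \<phi> x 0" using philin2[of x] unfolding Vector_Spaces.linear_iff by blast
    then show "\<phi> x 0 = 0" by simp
  qed
  have phi0': "\<And>y. \<phi> 0 y = 0"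
  proof -
    fix y have "\<phi> (0 + 0) y = \<phi> 0 y + \<phi> 0 y" using philin1[of y] unfolding Vector_Spaces.linear_iff by blast
    then show "\<phi> 0 y = 0" by simp
  qed
  have flin: "Vector_Spaces.linear (Xs s) (Xs s) f" using fC unfolding C1_TSD_def by auto
  have fadd: "\<And>u v. f (u + v) = f u + f v" and fsc: "\<And>c u. f (Xs s c u) = Xs s c (f u)"
    using flin by (auto simp: Vector_Spaces.linear_iff)
  have f0: "f 0 = 0" using fadd[of 0 0] by simp
  define g where "g x = snd (f (0, x))" for x
  define al where "al x = fst (f (0, x))" for x
  obtain c z0 where fu: "f (1, 0) = (c, z0)" by (cases "f (1,0)") auto
  have fx: "\<And>x. f (0, x) = (al x, g x)" by (simp add: g_def al_def)
  have g0: "g 0 = 0" and al0: "al 0 = 0" using f0 by (simp_all add: g_def al_def zero_prod_def)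
  have central: "\<And>y. br z0 y = 0"
  proof -
    fix y
    have "Theta2 s br \<phi> (1, 0) (0, y) (1, 0) = tsd_d1 s br f (1, 0) (0, y) (1, 0)" using fe by simp
    then show "br z0 y = 0"
      by (simp add: Theta2_def tsd_d1_def T_op_def q_op_def fu fx s0 s1 sz br0 b0 phi0 phi0'
          f0 g0 al0 zero_prod_def)
  qed
  have eq1: "\<And>x y. \<phi> x y = g (br x y) - br (g x) y - (s (al y) x + br x (g y)) - (s c (br x y) + br (br x y) z0)"
  proof -
    fix x y
    have "Theta2 s br \<phi> (0, x) (0, y) (1, 0) = tsd_d1 s br f (0, x) (0, y) (1, 0)" using fe by simp
    then show "?thesis x y"
      by (simp add: Theta2_def tsd_d1_def T_op_def q_op_def fu fx s0 s1 sz br0 b0 phi0 phi0')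
  qed
  have eq2: "\<And>y. al y = 0"
  proof -
    fix y
    have "Theta2 s br \<phi> (1, 0) (0, y) (1, 0) = tsd_d1 s br f (1, 0) (0, y) (1, 0)" using fe by simp
    then show "al y = 0"
      by (simp add: Theta2_def tsd_d1_def T_op_def q_op_def fu fx s0 s1 sz br0 b0 phi0 phi0'
          f0 g0 al0 zero_prod_def)
  qed
  define F where "F x = g x + s c x" for x
  have glin: "Vector_Spaces.linear s s g"
  proof -
    have "\<And>x y. g (x + y) = g x + g y"
      using fadd[of "(0,_)" "(0,_)"] by (simp add: g_def)
    moreover have "\<And>r x. g (s r x) = s r (g x)"
    proof -
      fix r x
      have "f (Xs s r (0, x)) = Xs s r (f (0, x))" by (rule fsc)
      then show "g (s r x) = s r (g x)" by (simp add: Xs_def g_def)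
    qed
    ultimately show ?thesis using vs by (simp add: Vector_Spaces.linear_iff)
  qed
  have idlin: "Vector_Spaces.linear s s (\<lambda>x. s c x)"
    using vs by (simp add: Vector_Spaces.linear_iff sadd sass mult.commute)
  have Flin: "Vector_Spaces.linear s s F"
    using glin idlin vs by (simp add: Vector_Spaces.linear_iff F_def sadd algebra_simps)
  have "\<phi> = lie_d1 br F"
  proof (intro ext)
    fix x y
    have bs1: "br (s c x) y = s c (br x y)" and bs2: "br x (s c y) = s c (br x y)"
      using assms(1) unfolding lie_algebra_def by auto
    have "br (br x y) z0 = 0" using central banti by (metis neg_equal_0_iff_equal)
    then show "\<phi> x y = lie_d1 br F x y"
      unfolding lie_d1_def F_def using eq1[of x y] eq2[of y]
      by (simp add: s0 badd1 badd2 bs1 bs2 algebra_simps)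
  qed
  then show ?thesis using Flin by blast
qed

end
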